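(* Let $\Lambda\subset\mathbb B_d$ be an interpolating sequence. Then $\{w\}\cup\Lambda$ is also an interpolating sequence for every $w\in\mathbb B_d$.
   Context: $\mathbb B_d$ is the open unit ball of $\mathbb C^d$; $\mathcal M_d$ is the multiplier algebra of the Drury–Arveson space $H^2_d$ (the reproducing kernel Hilbert space on $\mathbb B_d$ with kernel $(1-\langle z,w\rangle)^{-1}$). A countable set $\Lambda\subset\mathbb B_d$ is an interpolating sequence if for every bounded function $a$ on $\Lambda$ there is $\psi\in\mathcal M_d$ with $\psi(\lambda)=a(\lambda)$ for all $\lambda\in\Lambda$. *)

theory Defs
  imports "HOL-Analysis.Analysis"
begin

text \<open>Points of complex d-space are vectors of type complex^'d; the dimension d is
  CARD('d).  The open unit ball B_d is ball 0 1 (Euclidean norm).\<close>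

definition da_inner :: "complex^'d \<Rightarrow> complex^'d \<Rightarrow> complex" where
  "da_inner z w = (\<Sum>i\<in>UNIV. z $ i * cnj (w $ i))"

definition da_kernel :: "complex^'d \<Rightarrow> complex^'d \<Rightarrow> complex" where
  "da_kernel z w = 1 / (1 - da_inner z w)"

text \<open>Membership in the reproducing kernel Hilbert space H^2_d with kernel da_kernel
  (Aronszajn / Moore): f belongs to H(K) iff the functional
  sum_i a_i k_{z_i} |-> sum_i cnj(a_i) f(z_i) on the span of kernel functions is bounded,
  i.e. |sum_i cnj(a_i) f(z_i)|^2 <= c * || sum_i a_i k_{z_i} ||^2 for some constant c.
  Only the values of f on the ball matter.\<close>
definition in_H2 :: "(complex^'d \<Rightarrow> complex) \<Rightarrow> bool" where
  "in_H2 f \<longleftrightarrow> (\<exists>c::real. \<forall>(n::nat) (z::nat \<Rightarrow> complex^'d) (a::nat \<Rightarrow> complex).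
      (\<forall>i<n. z i \<in> ball 0 1) \<longrightarrow>
      (cmod (\<Sum>i<n. cnj (a i) * f (z i)))\<^sup>2
        \<le> c * Re (\<Sum>i<n. \<Sum>j<n. a i * cnj (a j) * da_kernel (z j) (z i)))"

definition is_multiplier :: "(complex^'d \<Rightarrow> complex) \<Rightarrow> bool" where
  "is_multiplier \<phi> \<longleftrightarrow> (\<forall>f. in_H2 f \<longrightarrow> in_H2 (\<lambda>z. \<phi> z * f z))"

definition interpolating_seq :: "(complex^'d) set \<Rightarrow> bool" where
  "interpolating_seq \<Lambda> \<longleftrightarrow> countable \<Lambda> \<and> \<Lambda> \<subseteq> ball 0 1 \<and>
     (\<forall>a::complex^'d \<Rightarrow> complex. bounded (a ` \<Lambda>) \<longrightarrow>
        (\<exists>\<psi>. is_multiplier \<psi> \<and> (\<forall>x\<in>\<Lambda>. \<psi> x = a x)))"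

end

theory Submission
  imports Defs
begin

lemma da_inner_norm: "cmod (da_inner z w) \<le> norm z * norm w"
proof -
  have "cmod (da_inner z w) \<le> (\<Sum>i\<in>UNIV. cmod (z $ i) * cmod (w $ i))"
    unfolding da_inner_def by (rule order_trans[OF norm_sum]) (simp add: norm_mult)
  also have "\<dots> = (\<Sum>i\<in>UNIV. \<bar>cmod (z $ i)\<bar> * \<bar>cmod (w $ i)\<bar>)" by simp
  also have "\<dots> \<le> norm z * norm w" unfolding norm_vec_def by (rule L2_set_mult_ineq)
  finally show ?thesis .
qed

lemma da_inner_lt1: "z \<in> ball 0 1 \<Longrightarrow> w \<in> ball 0 1 \<Longrightarrow> cmod (da_inner z w) < 1"
  by (rule le_less_trans[OF da_inner_norm]) (use mult_strict_mono[of "norm z" 1 "norm w" 1] in simp)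

definition qf :: "nat \<Rightarrow> (nat \<Rightarrow> complex^'d) \<Rightarrow> nat \<Rightarrow> (nat \<Rightarrow> complex) \<Rightarrow> complex" where
  "qf n z m a = (\<Sum>i<n. \<Sum>j<n. a i * cnj (a j) * da_inner (z j) (z i) ^ m)"

definition QK :: "nat \<Rightarrow> (nat \<Rightarrow> complex^'d) \<Rightarrow> (nat \<Rightarrow> complex) \<Rightarrow> complex" where
  "QK n z a = (\<Sum>i<n. \<Sum>j<n. a i * cnj (a j) * da_kernel (z j) (z i))"

lemma qf_0: "qf n z 0 a = of_real ((cmod (\<Sum>i<n. a i))\<^sup>2)"
  unfolding qf_def complex_norm_square by (simp add: sum_distrib_left sum_distrib_right, rule sum.swap)

lemma qf_Suc: "qf n z (Suc m) a = (\<Sum>l\<in>UNIV. qf n z m (\<lambda>i. a i * cnj (z i $ l)))"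
proof -
  have "qf n z (Suc m) a = (\<Sum>i<n. \<Sum>j<n. \<Sum>l\<in>UNIV. a i * cnj (z i $ l) * cnj (a j * cnj (z j $ l)) * da_inner (z j) (z i) ^ m)"
    unfolding qf_def by (rule sum.cong[OF refl], rule sum.cong[OF refl])
      (simp add: power_Suc da_inner_def[of "z _" "z _"] sum_distrib_left sum_distrib_right mult_ac)
  also have "\<dots> = (\<Sum>i<n. \<Sum>l\<in>UNIV. \<Sum>j<n. a i * cnj (z i $ l) * cnj (a j * cnj (z j $ l)) * da_inner (z j) (z i) ^ m)"
    by (rule sum.cong[OF refl], rule sum.swap)
  also have "\<dots> = (\<Sum>l\<in>UNIV. \<Sum>i<n. \<Sum>j<n. a i * cnj (z i $ l) * cnj (a j * cnj (z j $ l)) * da_inner (z j) (z i) ^ m)"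
    by (rule sum.swap)
  finally show ?thesis unfolding qf_def .
qed

lemma qf_nonneg: "0 \<le> Re (qf n z m a)"
proof (induction m arbitrary: a)
  case 0 then show ?case by (simp add: qf_0)
next
  case (Suc m) then show ?case by (simp add: qf_Suc sum_nonneg)
qed

lemma qf_sums:
  assumes "\<forall>i<n. z i \<in> ball 0 1"
  shows "(\<lambda>m. qf n z m a) sums QK n z a"
  unfolding qf_def QK_def
proof (intro sums_sum sums_mult)
  fix i j assume "i \<in> {..<n}" "j \<in> {..<n}"
  then have "cmod (da_inner (z j) (z i)) < 1" using assms da_inner_lt1 by auto
  then show "(\<lambda>m. da_inner (z j) (z i) ^ m) sums da_kernel (z j) (z i)"
    unfolding da_kernel_def by (rule geometric_sums)
qed

lemma QK_Re_sums: "\<forall>i<n. z i \<in> ball 0 1 \<Longrightarrow> (\<lambda>m. Re (qf n z m a)) sums Re (QK n z a)"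
  by (rule sums_Re, rule qf_sums)

lemma QK_ge_q0: assumes "\<forall>i<n. z i \<in> ball 0 1"
  shows "(cmod (\<Sum>i<n. a i))\<^sup>2 \<le> Re (QK n z a)"
proof -
  have s: "(\<lambda>m. Re (qf n z m a)) sums Re (QK n z a)" using QK_Re_sums[OF assms] .
  have "Re (qf n z 0 a) \<le> Re (QK n z a)"
  proof (rule sums_le[OF _ sums_single[of 0 "\<lambda>m. Re (qf n z m a)"] s])
    fix m show "(if m = 0 then Re (qf n z m a) else 0) \<le> Re (qf n z m a)"
      using qf_nonneg[of n z m a] by simp
  qed
  then show ?thesis by (simp add: qf_0)
qed

lemma QK_nonneg: "\<forall>i<n. z i \<in> ball 0 1 \<Longrightarrow> 0 \<le> Re (QK n z a)"
  using QK_ge_q0[of n z a] by (meson order_trans zero_le_power2)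

lemma QK_coord: assumes "\<forall>i<n. z i \<in> ball 0 1"
  shows "Re (QK n z (\<lambda>i. a i * cnj (z i $ k))) \<le> Re (QK n z a)"
proof -
  let ?b = "\<lambda>i. a i * cnj (z i $ k)"
  have sb: "(\<lambda>m. Re (qf n z m ?b)) sums Re (QK n z ?b)" using QK_Re_sums[OF assms] .
  have sa: "(\<lambda>m. Re (qf n z m a)) sums Re (QK n z a)" using QK_Re_sums[OF assms] .
  have sa1: "(\<lambda>m. Re (qf n z (Suc m) a)) sums (Re (QK n z a) - Re (qf n z 0 a))"
    using sums_Suc_iff[of "\<lambda>m. Re (qf n z m a)"] sa by simp
  have le: "Re (qf n z m ?b) \<le> Re (qf n z (Suc m) a)" for m
  proof -
    have "Re (qf n z (Suc m) a) = (\<Sum>l\<in>UNIV. Re (qf n z m (\<lambda>i. a i * cnj (z i $ l))))"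
      by (simp add: qf_Suc)
    also have "Re (qf n z m ?b) \<le> \<dots>"
      by (rule member_le_sum) (auto simp: qf_nonneg)
    finally show ?thesis .
  qed
  have "Re (QK n z ?b) \<le> Re (QK n z a) - Re (qf n z 0 a)"
    by (rule sums_le[OF _ sb sa1]) (rule le)
  then show ?thesis using qf_nonneg[of n z 0 a] by linarith
qed

lemma H2_one: "in_H2 (\<lambda>x::complex^'d. 1)"
  unfolding in_H2_def
proof (intro exI[of _ 1] allI impI)
  fix n :: nat and z :: "nat \<Rightarrow> complex^'d" and a :: "nat \<Rightarrow> complex"
    assume z: "\<forall>i<n. z i \<in> ball 0 1"
  have "cmod (\<Sum>i<n. cnj (a i) * 1) = cmod (\<Sum>i<n. a i)"
  proof -
    have "(\<Sum>i<n. cnj (a i) * 1) = cnj (\<Sum>i<n. a i)" by (simp add: cnj_sum)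
    then show ?thesis by (simp only: complex_mod_cnj)
  qed
  then show "(cmod (\<Sum>i<n. cnj (a i) * 1))\<^sup>2 \<le> 1 * Re (\<Sum>i<n. \<Sum>j<n. a i * cnj (a j) * da_kernel (z j) (z i))"
    using QK_ge_q0[OF z, of a] by (simp add: QK_def)
qed

lemma H2_coord: fixes f :: "complex^'d \<Rightarrow> complex" assumes "in_H2 f" shows "in_H2 (\<lambda>x. x $ k * f x)"
proof -
  obtain c where c: "\<And>n z a. \<forall>i<n. z i \<in> ball 0 1 \<Longrightarrow>
      (cmod (\<Sum>i<n. cnj (a i) * f (z i)))\<^sup>2 \<le> c * Re (QK n z a)"
    using assms unfolding in_H2_def QK_def by blast
  show ?thesis unfolding in_H2_def
  proof (intro exI[of _ "max c 0"] allI impI)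
    fix n :: nat and z :: "nat \<Rightarrow> complex^'d" and a :: "nat \<Rightarrow> complex"
    assume z: "\<forall>i<n. z i \<in> ball 0 1"
    let ?b = "\<lambda>i. a i * cnj (z i $ k)"
    have "(\<Sum>i<n. cnj (a i) * (z i $ k * f (z i))) = (\<Sum>i<n. cnj (?b i) * f (z i))"
      by (rule sum.cong) (simp_all add: mult.assoc)
    then have "(cmod (\<Sum>i<n. cnj (a i) * (z i $ k * f (z i))))\<^sup>2 \<le> c * Re (QK n z ?b)"
      using c[OF z, of ?b] by (simp only:)
    also have "\<dots> \<le> max c 0 * Re (QK n z ?b)"
      by (rule mult_right_mono) (auto simp: QK_nonneg[OF z])
    also have "\<dots> \<le> max c 0 * Re (QK n z a)"
      by (rule mult_left_mono) (auto simp: QK_coord[OF z])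
    finally show "(cmod (\<Sum>i<n. cnj (a i) * (z i $ k * f (z i))))\<^sup>2 \<le> max c 0 * Re (\<Sum>i<n. \<Sum>j<n. a i * cnj (a j) * da_kernel (z j) (z i))"
      by (simp add: QK_def)
  qed
qed

lemma H2_add: fixes f g :: "complex^'d \<Rightarrow> complex" assumes "in_H2 f" "in_H2 g" shows "in_H2 (\<lambda>x. f x + g x)"
proof -
  obtain c where c: "\<And>n z a. \<forall>i<n. z i \<in> ball 0 1 \<Longrightarrow>
      (cmod (\<Sum>i<n. cnj (a i) * f (z i)))\<^sup>2 \<le> c * Re (QK n z a)"
    using assms unfolding in_H2_def QK_def by blast
  obtain d where d: "\<And>n z a. \<forall>i<n. z i \<in> ball 0 1 \<Longrightarrow>
      (cmod (\<Sum>i<n. cnj (a i) * g (z i)))\<^sup>2 \<le> d * Re (QK n z a)"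
    using assms unfolding in_H2_def QK_def by blast
  show ?thesis unfolding in_H2_def
  proof (intro exI[of _ "2*c + 2*d"] allI impI)
    fix n :: nat and z :: "nat \<Rightarrow> complex^'d" and a :: "nat \<Rightarrow> complex"
    assume z: "\<forall>i<n. z i \<in> ball 0 1"
    let ?x = "\<Sum>i<n. cnj (a i) * f (z i)" and ?y = "\<Sum>i<n. cnj (a i) * g (z i)"
    have e: "(\<Sum>i<n. cnj (a i) * (f (z i) + g (z i))) = ?x + ?y"
      by (simp add: distrib_left sum.distrib)
    have "(cmod (?x + ?y))\<^sup>2 \<le> (cmod ?x + cmod ?y)\<^sup>2"
      by (simp add: norm_triangle_ineq power_mono)
    also have "\<dots> \<le> 2 * (cmod ?x)\<^sup>2 + 2 * (cmod ?y)\<^sup>2"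
      using zero_le_power2[of "cmod ?x - cmod ?y"] unfolding power2_eq_square by (simp add: algebra_simps)
    also have "\<dots> \<le> 2 * (c * Re (QK n z a)) + 2 * (d * Re (QK n z a))"
      using c[OF z, of a] d[OF z, of a] by linarith
    finally show "(cmod (\<Sum>i<n. cnj (a i) * (f (z i) + g (z i))))\<^sup>2 \<le> (2*c + 2*d) * Re (\<Sum>i<n. \<Sum>j<n. a i * cnj (a j) * da_kernel (z j) (z i))"
      unfolding e QK_def by (simp add: algebra_simps)
  qed
qed

lemma H2_scale: fixes f :: "complex^'d \<Rightarrow> complex" assumes "in_H2 f" shows "in_H2 (\<lambda>x. s * f x)"
proof -
  obtain c where c: "\<And>n z a. \<forall>i<n. z i \<in> ball 0 1 \<Longrightarrow>
      (cmod (\<Sum>i<n. cnj (a i) * f (z i)))\<^sup>2 \<le> c * Re (QK n z a)"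
    using assms unfolding in_H2_def QK_def by blast
  show ?thesis unfolding in_H2_def
  proof (intro exI[of _ "(cmod s)\<^sup>2 * c"] allI impI)
    fix n :: nat and z :: "nat \<Rightarrow> complex^'d" and a :: "nat \<Rightarrow> complex"
    assume z: "\<forall>i<n. z i \<in> ball 0 1"
    have e: "(\<Sum>i<n. cnj (a i) * (s * f (z i))) = s * (\<Sum>i<n. cnj (a i) * f (z i))"
      by (simp add: sum_distrib_left mult_ac)
    have "(cmod s)\<^sup>2 * (cmod (\<Sum>i<n. cnj (a i) * f (z i)))\<^sup>2 \<le> (cmod s)\<^sup>2 * (c * Re (QK n z a))"
      using c[OF z, of a] by (simp add: mult_left_mono)
    then show "(cmod (\<Sum>i<n. cnj (a i) * (s * f (z i))))\<^sup>2 \<le> ((cmod s)\<^sup>2 * c) * Re (\<Sum>i<n. \<Sum>j<n. a i * cnj (a j) * da_kernel (z j) (z i))"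
      unfolding e QK_def by (simp add: norm_mult power_mult_distrib mult_ac)
  qed
qed

lemma mult_const: "is_multiplier (\<lambda>x::complex^'d. c)"
  unfolding is_multiplier_def by (auto intro: H2_scale)

lemma mult_coord: "is_multiplier (\<lambda>x::complex^'d. x $ k)"
  unfolding is_multiplier_def by (auto intro: H2_coord)

lemma mult_add:
  fixes \<phi> \<psi> :: "complex^'d \<Rightarrow> complex"
  assumes "is_multiplier \<phi>" "is_multiplier \<psi>" shows "is_multiplier (\<lambda>x. \<phi> x + \<psi> x)"
  unfolding is_multiplier_def
proof (intro allI impI)
  fix f :: "complex^'d \<Rightarrow> complex" assume f: "in_H2 f"
  have "in_H2 (\<lambda>z. \<phi> z * f z + \<psi> z * f z)"
    using assms f unfolding is_multiplier_def by (auto intro: H2_add)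
  then show "in_H2 (\<lambda>z. (\<phi> z + \<psi> z) * f z)" by (simp add: distrib_right)
qed

lemma mult_mult:
  fixes \<phi> \<psi> :: "complex^'d \<Rightarrow> complex"
  assumes "is_multiplier \<phi>" "is_multiplier \<psi>" shows "is_multiplier (\<lambda>x. \<phi> x * \<psi> x)"
  unfolding is_multiplier_def
proof (intro allI impI)
  fix f :: "complex^'d \<Rightarrow> complex" assume f: "in_H2 f"
  have "in_H2 (\<lambda>z. \<phi> z * (\<psi> z * f z))"
    using assms f unfolding is_multiplier_def by auto
  then show "in_H2 (\<lambda>z. (\<phi> z * \<psi> z) * f z)" by (simp add: mult.assoc)
qed

lemma mult_sum:
  fixes F :: "'k \<Rightarrow> complex^'d \<Rightarrow> complex"
  assumes "finite A" "\<forall>k\<in>A. is_multiplier (F k)"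
  shows "is_multiplier (\<lambda>x. \<Sum>k\<in>A. F k x)"
  using assms
proof (induction A rule: finite_induct)
  case empty then show ?case using mult_const[of 0] by simp
next
  case (insert k A)
  then have "is_multiplier (\<lambda>x. F k x + (\<Sum>k\<in>A. F k x))"
    by (intro mult_add) auto
  then show ?case using insert by simp
qed

lemma mult_H2: fixes \<psi> :: "complex^'d \<Rightarrow> complex"
  assumes "is_multiplier \<psi>" shows "in_H2 \<psi>"
  using assms H2_one unfolding is_multiplier_def by fastforce

lemma kernel_tendsto:
  fixes x y :: "nat \<Rightarrow> complex^'d"
  assumes "x \<longlonglongrightarrow> a" "y \<longlonglongrightarrow> b" "1 - da_inner a b \<noteq> 0"
  shows "(\<lambda>n. da_kernel (x n) (y n)) \<longlonglongrightarrow> da_kernel a b"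
proof -
  have "(\<lambda>n. da_inner (x n) (y n)) \<longlonglongrightarrow> da_inner a b"
    unfolding da_inner_def by (intro tendsto_intros assms)
  then show ?thesis unfolding da_kernel_def
    by (intro tendsto_intros) (use assms in auto)
qed

lemma H2_limit:
  fixes f :: "complex^'d \<Rightarrow> complex"
  assumes "in_H2 f" "w \<in> ball 0 1" "t \<longlonglongrightarrow> w" "\<forall>n. t n \<in> ball 0 1" "\<forall>n. f (t n) = v"
  shows "f w = v"
proof -
  obtain c where c: "\<And>n z a. \<forall>i<n. z i \<in> ball 0 1 \<Longrightarrow>
      (cmod (\<Sum>i<n. cnj (a i) * f (z i)))\<^sup>2 \<le> c * Re (QK n z a)"
    using assms unfolding in_H2_def QK_def by blast
  define D where "D z = da_kernel z z - da_kernel w z - da_kernel z w + da_kernel w w" for z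
  have bound: "(cmod (v - f w))\<^sup>2 \<le> c * Re (D (t n))" for n
  proof -
    let ?z = "\<lambda>i::nat. if i = 0 then t n else w" and ?a = "\<lambda>i::nat. if i = 0 then (1::complex) else -1"
    have "\<forall>i<2. ?z i \<in> ball 0 1" using assms by auto
    from c[OF this, of ?a] show ?thesis
      by (simp add: QK_def D_def numeral_2_eq_2 assms(5) algebra_simps)
  qed
  have nz: "1 - da_inner w w \<noteq> 0" using da_inner_lt1[OF assms(2) assms(2)] by auto
  have c1: "(\<lambda>n. w) \<longlonglongrightarrow> w" by simp
  have "(\<lambda>n. D (t n)) \<longlonglongrightarrow> D w"
    unfolding D_def
    by (intro tendsto_diff tendsto_add kernel_tendsto assms(3) c1 nz)
  moreover have "D w = 0" by (simp add: D_def)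
  ultimately have "(\<lambda>n. c * Re (D (t n))) \<longlonglongrightarrow> c * Re 0"
    by (intro tendsto_intros) simp
  then have "(cmod (v - f w))\<^sup>2 \<le> 0"
    using bound by (intro LIMSEQ_le_const[where x = 0 and X = "\<lambda>n. c * Re (D (t n))"]) auto
  then show ?thesis by simp
qed

lemma separated:
  fixes \<Lambda> :: "(complex^'d) set"
  assumes "interpolating_seq \<Lambda>" "w \<in> ball 0 1" "w \<notin> \<Lambda>"
  shows "\<exists>\<delta>>0. \<forall>x\<in>\<Lambda>. \<delta> \<le> norm (x - w)"
proof (rule ccontr)
  assume "\<not> ?thesis"
  then have ex: "\<exists>x\<in>\<Lambda>. norm (x - w) < e" if "e > 0" for e
    using that by (meson not_le)
  have sub: "\<Lambda> \<subseteq> ball 0 1" using assms(1) unfolding interpolating_seq_def by blast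
  define pick where "pick e = (SOME x. x \<in> \<Lambda> \<and> norm (x - w) < e)" for e
  have pick: "pick e \<in> \<Lambda> \<and> norm (pick e - w) < e" if "e > 0" for e
    unfolding pick_def by (rule someI_ex) (use ex[OF that] in blast)
  define s where "s = rec_nat (pick 1) (\<lambda>_ x. pick (norm (x - w) / 2))"
  have s0: "s 0 = pick 1" and sS: "s (Suc n) = pick (norm (s n - w) / 2)" for n
    by (simp_all add: s_def)
  have sL: "s n \<in> \<Lambda>" for n
  proof (induction n)
    case 0 then show ?case using pick[of 1] s0 by simp
  next
    case (Suc n)
    then have "s n \<noteq> w" using assms(3) by auto
    then have "norm (s n - w) / 2 > 0" by simp
    then show ?case using pick sS by metis
  qed
  have pos: "norm (s n - w) > 0" for n using sL[of n] assms(3) by auto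
  have dec: "norm (s (Suc n) - w) < norm (s n - w) / 2" for n
    using pick[of "norm (s n - w) / 2"] pos[of n] sS[of n] by simp
  have bnd: "norm (s n - w) \<le> (1/2)^n" for n
  proof (induction n)
    case 0 then show ?case using pick[of 1] s0 by simp
  next
    case (Suc n) then show ?case using dec[of n] by simp
  qed
  have sm: "strict_mono (\<lambda>n. - norm (s n - w))"
    proof (rule strict_monoI_Suc)
    fix n show "- norm (s n - w) < - norm (s (Suc n) - w)" using dec[of n] pos[of n] by linarith
  qed
  have inj: "s m = s n \<Longrightarrow> m = n" for m n
    using strict_mono_eq[OF sm, of m n] by simp
  have "(\<lambda>n. s n - w) \<longlonglongrightarrow> 0"
    by (rule Lim_null_comparison[where g = "\<lambda>n. (1/2)^n"]) (use bnd in \<open>auto intro!: LIMSEQ_power_zero\<close>)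
  then have lim: "s \<longlonglongrightarrow> w" by (rule LIM_zero_cancel)
  have inball: "s n \<in> ball 0 1" for n using sL sub by blast
  define a where "a x = (if x \<in> s ` {n. even n} then 1 else (0::complex))" for x
  have "a ` \<Lambda> \<subseteq> {0, 1}" unfolding a_def by auto
  then have "bounded (a ` \<Lambda>)" by (rule bounded_subset[rotated]) auto
  then obtain \<psi> where \<psi>: "is_multiplier \<psi>" "\<forall>x\<in>\<Lambda>. \<psi> x = a x"
    using assms(1) unfolding interpolating_seq_def by blast
  have H: "in_H2 \<psi>" by (rule mult_H2[OF \<psi>(1)])
  have ev: "\<psi> (s (2*n)) = 1" for n using \<psi>(2) sL[of "2*n"] unfolding a_def by auto
  have od: "\<psi> (s (2*n+1)) = 0" for n
  proof -
    have "s (2*n+1) \<notin> s ` {n. even n}" using inj by fastforce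
    then show ?thesis using \<psi>(2) sL[of "2*n+1"] unfolding a_def by auto
  qed
  have sm2: "strict_mono (\<lambda>n::nat. 2*n)" "strict_mono (\<lambda>n::nat. 2*n+1)"
    by (auto simp: strict_mono_def)
  have "\<psi> w = 1"
    by (rule H2_limit[OF H assms(2) LIMSEQ_subseq_LIMSEQ[OF lim sm2(1)]]) (use inball[simplified] in \<open>auto simp: ev\<close>)
  moreover have "\<psi> w = 0"
    by (rule H2_limit[OF H assms(2) LIMSEQ_subseq_LIMSEQ[OF lim sm2(2)]]) (use inball[simplified] in \<open>auto simp: od[simplified]\<close>)
  ultimately show False by simp
qed

lemma nsq: "(norm (y::complex^'d))\<^sup>2 = (\<Sum>k\<in>UNIV. (cmod (y$k))\<^sup>2)"
  unfolding norm_vec_def L2_set_def by (simp add: sum_nonneg)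

lemma sum_cnj_norm: "(\<Sum>k\<in>UNIV. (x$k - w$k) * cnj (x$k - w$k)) = of_real ((norm (x - w::complex^'d))\<^sup>2)"
proof -
  have "(\<Sum>k\<in>UNIV. (x$k - w$k) * cnj (x$k - w$k)) = (\<Sum>k\<in>UNIV. of_real ((cmod ((x - w)$k))\<^sup>2))"
    by (rule sum.cong[OF refl]) (simp only: vector_minus_component complex_norm_square)
  also have "\<dots> = of_real ((norm (x - w))\<^sup>2)" by (simp add: nsq[of "x - w"])
  finally show ?thesis .
qed

theorem corollary2p4:
  fixes \<Lambda> :: "(complex^'d) set" and w :: "complex^'d"
  assumes "interpolating_seq \<Lambda>"
    and "w \<in> ball 0 1"
  shows "interpolating_seq (insert w \<Lambda>)"
proof (cases "w \<in> \<Lambda>")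
  case True then show ?thesis using assms(1) by (simp add: insert_absorb)
next
  case False
  obtain \<delta> where \<delta>: "\<delta> > 0" "\<forall>x\<in>\<Lambda>. \<delta> \<le> norm (x - w)"
    using separated[OF assms(1,2) False] by blast
  have I: "countable \<Lambda>" "\<Lambda> \<subseteq> ball 0 1"
    "\<And>a::complex^'d \<Rightarrow> complex. bounded (a ` \<Lambda>) \<Longrightarrow> \<exists>\<psi>. is_multiplier \<psi> \<and> (\<forall>x\<in>\<Lambda>. \<psi> x = a x)"
    using assms(1) unfolding interpolating_seq_def by blast+
  define b where "b k x = cnj (x$k - w$k) / of_real ((norm (x - w))\<^sup>2)" for k x
  have bb: "bounded (b k ` \<Lambda>)" for k
    unfolding bounded_iff
  proof (intro exI[of _ "1/\<delta>"] ballI)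
    fix y assume "y \<in> b k ` \<Lambda>"
    then obtain x where x: "x \<in> \<Lambda>" "y = b k x" by blast
    have p: "norm (x - w) \<ge> \<delta>" using \<delta> x by blast
    then have p0: "norm (x - w) > 0" using \<delta> by linarith
    have "norm y = cmod ((x - w)$k) / (norm (x - w))\<^sup>2"
      by (simp add: x b_def norm_divide norm_power del: complex_cnj_diff flip: complex_cnj_diff)
    also have "\<dots> \<le> norm (x - w) / (norm (x - w))\<^sup>2"
      by (rule divide_right_mono) (auto simp del: vector_minus_component intro: Finite_Cartesian_Product.norm_nth_le)
    also have "\<dots> = 1 / norm (x - w)" using p0 by (simp add: power2_eq_square)
    also have "\<dots> \<le> 1 / \<delta>" using p \<delta> by (simp add: frac_le)
    finally show "norm y \<le> 1/\<delta>" .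
  qed
  have "\<forall>k. \<exists>h. is_multiplier h \<and> (\<forall>x\<in>\<Lambda>. h x = b k x)" using I(3) bb by blast
  then obtain H where H: "\<And>k. is_multiplier (H k)" "\<And>k x. x \<in> \<Lambda> \<Longrightarrow> H k x = b k x"
    by metis
  define \<phi> where "\<phi> x = 1 - (\<Sum>k\<in>UNIV. (x$k - w$k) * H k x)" for x
  have m1: "is_multiplier (\<lambda>x. (x$k - w$k) * H k x)" for k
  proof -
    have "is_multiplier (\<lambda>x. (x$k + (- w$k)) * H k x)"
      by (intro mult_mult mult_add mult_coord mult_const H)
    then show ?thesis by simp
  qed
  have "is_multiplier (\<lambda>x. 1 + (-1) * (\<Sum>k\<in>UNIV. (x$k - w$k) * H k x))"
    by (intro mult_add mult_mult mult_const mult_sum) (auto intro: m1)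
  then have m\<phi>: "is_multiplier \<phi>" unfolding \<phi>_def by simp
  have \<phi>w: "\<phi> w = 1" by (simp add: \<phi>_def)
  have \<phi>L: "\<phi> x = 0" if "x \<in> \<Lambda>" for x
  proof -
    have p0: "norm (x - w) > 0" using \<delta> that by force
    have "(\<Sum>k\<in>UNIV. (x$k - w$k) * H k x) = (\<Sum>k\<in>UNIV. (x$k - w$k) * cnj (x$k - w$k)) / of_real ((norm (x - w))\<^sup>2)"
      using that by (simp add: H(2) b_def sum_divide_distrib)
    also have "\<dots> = 1" using p0 by (subst sum_cnj_norm) simp
    finally show ?thesis by (simp add: \<phi>_def)
  qed
  show ?thesis
    unfolding interpolating_seq_def
  proof (intro conjI allI impI)
    show "countable (insert w \<Lambda>)" using I(1) by simp
    show "insert w \<Lambda> \<subseteq> ball 0 1" using I(2) assms(2) by simp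
    fix a :: "complex^'d \<Rightarrow> complex"
    assume "bounded (a ` insert w \<Lambda>)"
    then have "bounded (a ` \<Lambda>)" by (rule bounded_subset) auto
    then obtain \<psi> where \<psi>: "is_multiplier \<psi>" "\<forall>x\<in>\<Lambda>. \<psi> x = a x" using I(3) by blast
    define \<psi>' where "\<psi>' x = \<psi> x + (a w - \<psi> w) * \<phi> x" for x
    have "is_multiplier \<psi>'" unfolding \<psi>'_def
      by (intro mult_add mult_mult mult_const \<psi>(1) m\<phi>)
    moreover have "\<forall>x\<in>insert w \<Lambda>. \<psi>' x = a x"
      using \<psi>(2) \<phi>L \<phi>w by (auto simp: \<psi>'_def)
    ultimately show "\<exists>\<psi>. is_multiplier \<psi> \<and> (\<forall>x\<in>insert w \<Lambda>. \<psi> x = a x)" by blast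
  qed
qed

end
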